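(* Let $\mathcal{H}=(V,E)$ be a linear hypergraph without loop, with $n$ vertices, such that $\Delta(\mathcal{H})\le \sqrt{n}+1$. Then $\mathrm{q}(\mathcal{H})\le n$.
   Context: A hypergraph $\mathcal{H}=(V,E)$ has a finite vertex set $V$ and a finite set $E$ of nonempty subsets of $V$ (hyperedges); a loop is a hyperedge with one element; linear means distinct hyperedges share at most one vertex. $\Delta(\mathcal{H})$ is the maximum number of hyperedges containing a vertex. The chromatic index $\mathrm{q}(\mathcal{H})$ is the least number of colors in a coloring of hyperedges where distinct intersecting hyperedges get different colors. *)

theory Defs
  imports Complex_Main
begin

definition hypergraph :: "'a set \<Rightarrow> 'a set set \<Rightarrow> bool" where
  "hypergraph V E \<longleftrightarrow> finite V \<and> (\<forall>e\<in>E. e \<noteq> {} \<and> e \<subseteq> V)"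

definition loopless :: "'a set set \<Rightarrow> bool" where
  "loopless E \<longleftrightarrow> (\<forall>e\<in>E. card e \<noteq> 1)"

definition linear_hg :: "'a set set \<Rightarrow> bool" where
  "linear_hg E \<longleftrightarrow> (\<forall>e\<in>E. \<forall>f\<in>E. e \<noteq> f \<longrightarrow> card (e \<inter> f) \<le> 1)"

definition hdegree :: "'a set set \<Rightarrow> 'a \<Rightarrow> nat" where
  "hdegree E v = card {e\<in>E. v \<in> e}"

text \<open>Maximum degree (0 for the empty vertex set).\<close>
definition max_degree :: "'a set \<Rightarrow> 'a set set \<Rightarrow> nat" where
  "max_degree V E = Sup (hdegree E ` V)"

definition proper_edge_colouring :: "'a set set \<Rightarrow> nat \<Rightarrow> ('a set \<Rightarrow> nat) \<Rightarrow> bool" where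
  "proper_edge_colouring E k c \<longleftrightarrow> (\<forall>e\<in>E. c e < k) \<and>
     (\<forall>e\<in>E. \<forall>f\<in>E. e \<noteq> f \<and> e \<inter> f \<noteq> {} \<longrightarrow> c e \<noteq> c f)"

definition chromatic_index :: "'a set set \<Rightarrow> nat" where
  "chromatic_index E = (LEAST k. \<exists>c. proper_edge_colouring E k c)"

end

theory Submission
  imports Defs
begin


definition conf :: "'a set set \<Rightarrow> 'a set \<Rightarrow> 'a set set" where
  "conf S e = {f\<in>S. f \<noteq> e \<and> f \<inter> e \<noteq> {}}"

lemma degen:
  assumes fin: "finite E0"
    and dg: "\<And>S. S \<subseteq> E0 \<Longrightarrow> S \<noteq> {} \<Longrightarrow> \<exists>e\<in>S. card (conf S e) < n"
  shows "\<exists>c. proper_edge_colouring E0 n c"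
proof -
  have "S \<subseteq> E0 \<Longrightarrow> \<exists>c. proper_edge_colouring S n c" for S
  proof (induction "card S" arbitrary: S rule: less_induct)
    case less
    show ?case
    proof (cases "S = {}")
      case True
      then show ?thesis unfolding proper_edge_colouring_def by auto
    next
      case False
      then obtain e where e: "e \<in> S" "card (conf S e) < n" using dg less.prems by blast
      have finS: "finite S" using fin less.prems finite_subset by blast
      have "card (S - {e}) < card S" using e finS by (meson card_Diff1_less)
      then obtain c where c: "proper_edge_colouring (S - {e}) n c"
        using less.hyps less.prems by blast
      have finC: "finite (conf S e)" using finS unfolding conf_def by auto
      have "card (c ` conf S e) < n" using e(2) card_image_le[OF finC, of c] by linarith
      then have "\<not> {..<n} \<subseteq> c ` conf S e"
        using card_mono[OF finite_imageI[OF finC]] by fastforce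
      then obtain col where col: "col < n" "col \<notin> c ` conf S e" by auto
      define c' where "c' = c(e := col)"
      have "proper_edge_colouring S n c'"
        unfolding proper_edge_colouring_def
      proof (intro conjI ballI impI)
        fix f assume "f \<in> S" then show "c' f < n"
          using c col unfolding c'_def proper_edge_colouring_def by auto
      next
        fix f g assume fg: "f \<in> S" "g \<in> S" "f \<noteq> g \<and> f \<inter> g \<noteq> {}"
        show "c' f \<noteq> c' g"
        proof (cases "f = e \<or> g = e")
          case True
          then show ?thesis using fg col unfolding c'_def conf_def by auto
        next
          case False
          then show ?thesis using fg c unfolding c'_def proper_edge_colouring_def by auto
        qed
      qed
      then show ?thesis by blast
    qed
  qed
  then show ?thesis by blast
qed

lemma arith_tight:
  fixes m k n D :: nat
  assumes "m*(k-1) \<le> k*(n-k)" "m \<le> k*D" "n \<le> m" "D*D \<le> n" "2 \<le> k" "k \<le> n"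
  shows "k*k = n \<and> m = n \<and> m*(k-1) = k*(n-k)"
proof -
  have a: "n*(k-1) \<le> k*(n-k)" using assms(1,3) by (meson le_trans mult_le_mono1)
  have e1: "int (n*(k-1)) = int n * (int k - 1)" using assms(5) by (simp add: of_nat_diff)
  have e2: "int (k*(n-k)) = int k * (int n - int k)" using assms(6) by (simp add: of_nat_diff)
  have b: "int n * (int k - 1) \<le> int k * (int n - int k)" using a e1 e2 by linarith
  have "int (k*k) \<le> int n" using b by (simp add: algebra_simps)
  then have kk: "k*k \<le> n" by (simp only: of_nat_le_iff)
  have "n \<le> k*D" using assms(2,3) by simp
  then have "n*n \<le> (k*D)*(k*D)" by (simp add: mult_le_mono)
  also have "\<dots> = (k*k)*(D*D)" by (simp add: algebra_simps)
  also have "\<dots> \<le> (k*k)*n" using assms(4) by simp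
  finally have "n*n \<le> (k*k)*n" .
  moreover have "n > 0" using assms(5,6) by simp
  ultimately have "n \<le> k*k" by simp
  with kk have kn: "k*k = n" by simp
  have "D \<le> k"
  proof (rule ccontr)
    assume "\<not> D \<le> k" then have "k < D" by simp
    then have "k*k < D*D" by (simp add: mult_strict_mono)
    then show False using kn assms(4) by simp
  qed
  then have "m \<le> k*k" using assms(2) by (meson le_trans mult_le_mono2)
  then have mn: "m = n" using kn assms(3) by simp
  have "int n * (int k - 1) = int k * (int n - int k)" using kn
    by (metis (no_types, opaque_lifting) mult.commute right_diff_distrib' mult.right_neutral of_nat_mult)
  then have "int (n*(k-1)) = int (k*(n-k))" by (simp only: e1 e2)
  then have "int (m*(k-1)) = int (k*(n-k))" by (simp only: mn)
  then have "m*(k-1) = k*(n-k)" by (simp only: of_nat_eq_iff)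
  then show ?thesis using kn mn by simp
qed



locale lhg =
  fixes V :: "'a set" and E :: "'a set set" and D n :: nat
  assumes hg: "hypergraph V E" and ll: "loopless E" and lin: "linear_hg E"
    and ncard: "n = card V" and degD: "\<And>v. v \<in> V \<Longrightarrow> hdegree E v \<le> D + 1"
    and DD: "D * D \<le> n"
begin

lemma finV: "finite V" using hg unfolding hypergraph_def by auto
lemma esub: "e \<in> E \<Longrightarrow> e \<subseteq> V" using hg unfolding hypergraph_def by auto
lemma ene: "e \<in> E \<Longrightarrow> e \<noteq> {}" using hg unfolding hypergraph_def by auto
lemma efin: "e \<in> E \<Longrightarrow> finite e" using esub finV finite_subset by blast
lemma ecard: "e \<in> E \<Longrightarrow> card e \<ge> 2"
proof -
  assume e: "e \<in> E"
  have "card e \<noteq> 0" using efin[OF e] ene[OF e] by simp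
  moreover have "card e \<noteq> 1" using ll e unfolding loopless_def by auto
  ultimately show ?thesis by linarith
qed
lemma finE: "finite E"
proof -
  have "E \<subseteq> Pow V" using esub by auto
  then show ?thesis using finV finite_subset by blast
qed
lemma two_elems: "e \<in> E \<Longrightarrow> \<exists>x y. x \<in> e \<and> y \<in> e \<and> x \<noteq> y"
proof -
  assume e: "e \<in> E"
  obtain x where x: "x \<in> e" using ene[OF e] by auto
  show ?thesis
  proof (cases "e = {x}")
    case True then show ?thesis using ecard[OF e] by simp
  next
    case False then show ?thesis using x by blast
  qed
qed
lemma lin2:
  assumes "e \<in> E" "f \<in> E" "x \<noteq> y" "x \<in> e" "y \<in> e" "x \<in> f" "y \<in> f"
  shows "e = f"
proof (rule ccontr)
  assume "e \<noteq> f"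
  then have "card (e \<inter> f) \<le> 1" using lin assms unfolding linear_hg_def by blast
  moreover have "card {x, y} \<le> card (e \<inter> f)"
    using assms efin by (intro card_mono) auto
  ultimately show False using assms(3) by simp
qed
lemma int1:
  assumes "e \<in> E" "f \<in> E" "e \<noteq> f" "e \<inter> f \<noteq> {}"
  shows "card (e \<inter> f) = 1"
proof -
  have "card (e \<inter> f) \<le> 1" using lin assms unfolding linear_hg_def by blast
  moreover have "card (e \<inter> f) \<noteq> 0" using assms efin by simp
  ultimately show ?thesis by linarith
qed
lemma deg_le: "S \<subseteq> E \<Longrightarrow> u \<in> V \<Longrightarrow> card {f\<in>S. u \<in> f} \<le> D + 1"
proof -
  assume "S \<subseteq> E" "u \<in> V"
  then have "card {f\<in>S. u \<in> f} \<le> card {f\<in>E. u \<in> f}"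
    using finE by (intro card_mono) auto
  then show ?thesis using degD[OF \<open>u \<in> V\<close>] unfolding hdegree_def by linarith
qed

lemma conf_kD:
  assumes "S \<subseteq> E" "e \<in> S"
  shows "card (conf S e) \<le> card e * D"
proof -
  have sub: "conf S e \<subseteq> (\<Union>u\<in>e. {f\<in>S. u \<in> f} - {e})" unfolding conf_def by auto
  have "card (conf S e) \<le> card (\<Union>u\<in>e. {f\<in>S. u \<in> f} - {e})"
    using sub finE assms(1) by (intro card_mono) (auto intro: finite_subset)
  also have "\<dots> \<le> (\<Sum>u\<in>e. card ({f\<in>S. u \<in> f} - {e}))"
    by (rule card_UN_le) (use assms efin in auto)
  also have "\<dots> \<le> (\<Sum>u\<in>e. D)"
  proof (rule sum_mono)
    fix u assume u: "u \<in> e"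
    have uV: "u \<in> V" using u assms esub by auto
    have fin: "finite {f\<in>S. u \<in> f}" using finE assms(1) by (auto intro: finite_subset)
    have "card ({f\<in>S. u \<in> f} - {e}) = card {f\<in>S. u \<in> f} - 1"
      using u assms fin by (simp add: card_Diff_singleton)
    then show "card ({f\<in>S. u \<in> f} - {e}) \<le> D" using deg_le[OF assms(1) uV] by simp
  qed
  also have "\<dots> = card e * D" by simp
  finally show ?thesis .
qed

lemma tight:
  assumes S: "S \<subseteq> E" and e: "e \<in> S" and mn: "\<And>f. f \<in> S \<Longrightarrow> card e \<le> card f"
    and big: "n \<le> card (conf S e)"
  shows "card e * card e = n" "\<And>f. f \<in> conf S e \<Longrightarrow> card f = card e"
    "\<And>u w. u \<in> e \<Longrightarrow> w \<in> V \<Longrightarrow> w \<notin> e \<Longrightarrow> \<exists>g\<in>S. u \<in> g \<and> w \<in> g"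
proof -
  define k where "k = card e"
  define m where "m = card (conf S e)"
  define U where "U = (\<Union>f\<in>conf S e. (f \<inter> e) \<times> (f - e))"
  have eE: "e \<in> E" using S e by auto
  have finC: "finite (conf S e)" using finE S unfolding conf_def by (auto intro: finite_subset)
  have CE: "\<And>f. f \<in> conf S e \<Longrightarrow> f \<in> E \<and> f \<noteq> e \<and> f \<inter> e \<noteq> {} \<and> f \<in> S"
    using S unfolding conf_def by auto
  have cardU: "card U = (\<Sum>f\<in>conf S e. card f - 1)"
  proof -
    have "card U = (\<Sum>f\<in>conf S e. card ((f \<inter> e) \<times> (f - e)))"
      unfolding U_def
    proof (rule card_UN_disjoint[OF finC])
      show "\<forall>f\<in>conf S e. finite ((f \<inter> e) \<times> (f - e))" using CE efin by auto
      show "\<forall>f\<in>conf S e. \<forall>g\<in>conf S e. f \<noteq> g \<longrightarrow> (f \<inter> e) \<times> (f - e) \<inter> (g \<inter> e) \<times> (g - e) = {}"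
      proof (intro ballI impI)
        fix f g assume fg: "f \<in> conf S e" "g \<in> conf S e" "f \<noteq> g"
        show "(f \<inter> e) \<times> (f - e) \<inter> (g \<inter> e) \<times> (g - e) = {}"
        proof (rule ccontr)
          assume "(f \<inter> e) \<times> (f - e) \<inter> (g \<inter> e) \<times> (g - e) \<noteq> {}"
          then obtain u w where "u \<in> f" "u \<in> e" "w \<in> f" "w \<notin> e" "u \<in> g" "w \<in> g" by auto
          then have "f = g" using lin2[of f g u w] CE fg by auto
          then show False using fg by simp
        qed
      qed
    qed
    also have "\<dots> = (\<Sum>f\<in>conf S e. card f - 1)"
    proof (rule sum.cong)
      fix f assume f: "f \<in> conf S e"
      have c1: "card (f \<inter> e) = 1" using int1[of f e] CE[OF f] eE by auto
      have "card (f - e) = card f - card (f \<inter> e)"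
        using efin CE[OF f] by (intro card_Diff_subset_Int) auto
      then show "card ((f \<inter> e) \<times> (f - e)) = card f - 1" using c1 by (simp add: card_cartesian_product)
    qed simp
    finally show ?thesis .
  qed
  have Usub: "U \<subseteq> e \<times> (V - e)" unfolding U_def using CE esub by blast
  have finP: "finite (e \<times> (V - e))" using efin[OF eE] finV by auto
  have cardP: "card (e \<times> (V - e)) = k * (n - k)"
    using esub[OF eE] finV unfolding k_def ncard by (simp add: card_cartesian_product card_Diff_subset efin[OF eE])
  have lowk: "\<And>f. f \<in> conf S e \<Longrightarrow> k - 1 \<le> card f - 1" using mn CE unfolding k_def by (simp add: diff_le_mono)
  have low: "m * (k - 1) \<le> (\<Sum>f\<in>conf S e. card f - 1)"
  proof -
    have "(\<Sum>f\<in>conf S e. k - 1) \<le> (\<Sum>f\<in>conf S e. card f - 1)" by (rule sum_mono) (rule lowk)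
    then show ?thesis unfolding m_def by simp
  qed
  have up: "card U \<le> k * (n - k)" using card_mono[OF finP Usub] cardP by simp
  have A: "k*k = n \<and> m = n \<and> m*(k-1) = k*(n-k)"
  proof (rule arith_tight)
    show "m * (k - 1) \<le> k * (n - k)" using low up cardU by simp
    show "m \<le> k * D" using conf_kD[OF S e] unfolding m_def k_def .
    show "n \<le> m" using big unfolding m_def .
    show "D * D \<le> n" by (rule DD)
    show "2 \<le> k" using ecard[OF eE] unfolding k_def .
    show "k \<le> n" unfolding k_def ncard using esub[OF eE] finV by (rule card_mono[rotated])
  qed
  then show "card e * card e = n" unfolding k_def by simp
  have eqs: "(\<Sum>f\<in>conf S e. card f - 1) = m * (k - 1)" using A low up cardU by linarith
  show "card f = card e" if f: "f \<in> conf S e" for f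
  proof (rule ccontr)
    assume "card f \<noteq> card e"
    then have "k - 1 < card f - 1" using mn[of f] CE[OF f] ecard[OF eE] unfolding k_def by simp
    then have "(\<Sum>f\<in>conf S e. k - 1) < (\<Sum>f\<in>conf S e. card f - 1)"
      using finC lowk f by (intro sum_strict_mono_ex1) auto
    then show False using eqs unfolding m_def by simp
  qed
  have "card U = card (e \<times> (V - e))" using eqs cardU cardP A by linarith
  then have Ueq: "U = e \<times> (V - e)" using card_subset_eq[OF finP Usub] by simp
  show "\<exists>g\<in>S. u \<in> g \<and> w \<in> g" if "u \<in> e" "w \<in> V" "w \<notin> e" for u w
  proof -
    have "(u, w) \<in> U" using Ueq that by auto
    then show ?thesis unfolding U_def using CE by blast
  qed
qed

end


context lhg begin

lemma alltight:
  assumes S: "S \<subseteq> E" "S \<noteq> {}" and big: "\<And>e. e \<in> S \<Longrightarrow> n \<le> card (conf S e)"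
  shows "\<exists>q. q * q = n \<and> (\<forall>e\<in>S. card e = q) \<and>
           (\<forall>v\<in>V. \<forall>w\<in>V. v \<noteq> w \<longrightarrow> (\<exists>g\<in>S. v \<in> g \<and> w \<in> g))"
proof -
  have finS: "finite S" using S finE finite_subset by blast
  define q where "q = Min (card ` S)"
  have "q \<in> card ` S" unfolding q_def using finS S(2) by (intro Min_in) auto
  then obtain e where e: "e \<in> S" "card e = q" by auto
  have qmin: "\<And>f. f \<in> S \<Longrightarrow> q \<le> card f" unfolding q_def using finS by simp
  have eE: "e \<in> E" using e S by auto
  have Tf: "card f * card f = n" "\<And>g. g \<in> conf S f \<Longrightarrow> card g = card f"
     "\<And>u w. u \<in> f \<Longrightarrow> w \<in> V \<Longrightarrow> w \<notin> f \<Longrightarrow> \<exists>g\<in>S. u \<in> g \<and> w \<in> g"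
    if fS: "f \<in> S" and fq: "card f = q" for f
  proof -
    have minf: "\<And>g. g \<in> S \<Longrightarrow> card f \<le> card g" using qmin fq by simp
    note TT = tight[OF S(1) fS minf big[OF fS]]
    show "card f * card f = n" by (rule TT(1))
    show "\<And>g. g \<in> conf S f \<Longrightarrow> card g = card f" by (rule TT(2))
    show "\<And>u w. u \<in> f \<Longrightarrow> w \<in> V \<Longrightarrow> w \<notin> f \<Longrightarrow> \<exists>g\<in>S. u \<in> g \<and> w \<in> g" by (rule TT(3))
  qed
  note Te = Tf[OF e]
  have confI: "\<And>f g x. f \<in> S \<Longrightarrow> f \<noteq> g \<Longrightarrow> x \<in> f \<Longrightarrow> x \<in> g \<Longrightarrow> f \<in> conf S g"
    unfolding conf_def by auto
  have sizes: "card g = q" if g: "g \<in> S" for g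
  proof (cases "g = e")
    case True then show ?thesis using e by simp
  next
    case False
    show ?thesis
    proof (cases "g \<inter> e = {}")
      case False
      then have "g \<in> conf S e" using g \<open>g \<noteq> e\<close> unfolding conf_def by auto
      then show ?thesis using Te(2) e by simp
    next
      case True
      obtain y where y: "y \<in> g" using ene[of g] g S by blast
      obtain u where u: "u \<in> e" using ene[OF eE] by blast
      have yV: "y \<in> V" using esub y g S by blast
      have "y \<notin> e" using True y by blast
      then obtain f where f: "f \<in> S" "u \<in> f" "y \<in> f" using Te(3)[OF u yV] by blast
      have "f \<noteq> e" using f \<open>y \<notin> e\<close> by blast
      then have "f \<in> conf S e" using confI[OF f(1) _ f(2) u] by simp
      then have cf: "card f = q" using Te(2) e by simp
      have "g \<noteq> f" using True f u by blast
      then have "g \<in> conf S f" using confI[OF g _ y f(3)] by simp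
      then show ?thesis using Tf(2)[OF f(1) cf] cf by simp
    qed
  qed
  have cover: "\<exists>g\<in>S. v \<in> g \<and> w \<in> g" if vw: "v \<in> V" "w \<in> V" "v \<noteq> w" for v w
  proof (cases "v \<in> e")
    case True
    then show ?thesis
    proof (cases "w \<in> e")
      case True then show ?thesis using \<open>v \<in> e\<close> e by blast
    next
      case False then show ?thesis using Te(3)[OF \<open>v \<in> e\<close> vw(2)] by blast
    qed
  next
    case vne: False
    show ?thesis
    proof (cases "w \<in> e")
      case True then show ?thesis using Te(3)[OF True vw(1) vne] by blast
    next
      case False
      obtain u where u: "u \<in> e" using ene[OF eE] by blast
      obtain f where f: "f \<in> S" "u \<in> f" "v \<in> f" using Te(3)[OF u vw(1) vne] by blast
      have "f \<noteq> e" using f vne by blast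
      then have "f \<in> conf S e" using confI[OF f(1) _ f(2) u] by simp
      then have cf: "card f = q" using Te(2) e by simp
      show ?thesis
      proof (cases "w \<in> f")
        case True then show ?thesis using f by blast
      next
        case False then show ?thesis using Tf(3)[OF f(1) cf f(3) vw(2)] by blast
      qed
    qed
  qed
  have "q * q = n" using Te(1) e(2) by simp
  moreover have "\<forall>e\<in>S. card e = q" using sizes by blast
  moreover have "\<forall>v\<in>V. \<forall>w\<in>V. v \<noteq> w \<longrightarrow> (\<exists>g\<in>S. v \<in> g \<and> w \<in> g)" using cover by blast
  ultimately show ?thesis by blast
qed

lemma affine:
  assumes qn: "q * q = n" and Ene: "E \<noteq> {}" and sz: "\<And>e. e \<in> E \<Longrightarrow> card e = q"
    and cov: "\<And>v w. v \<in> V \<Longrightarrow> w \<in> V \<Longrightarrow> v \<noteq> w \<Longrightarrow> \<exists>g\<in>E. v \<in> g \<and> w \<in> g"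
    and Dq: "D \<le> q"
  shows "\<exists>c. proper_edge_colouring E n c"
proof -
  obtain e0 where e0: "e0 \<in> E" using Ene by blast
  have q2: "2 \<le> q" using ecard[OF e0] sz[OF e0] by simp
  obtain p where p: "p \<in> e0" using ene[OF e0] by blast
  have pV: "p \<in> V" using p e0 esub by blast
  define Lp where "Lp = {l\<in>E. p \<in> l}"
  have finLp: "finite Lp" unfolding Lp_def using finE by simp
  have LpE: "Lp \<subseteq> E" unfolding Lp_def by auto
  have LpD: "card Lp \<le> D + 1" unfolding Lp_def using deg_le[OF _ pV, of E] by simp
  have Lpbig: "q + 1 \<le> card Lp"
  proof -
    have "V - {p} \<subseteq> (\<Union>l\<in>Lp. l - {p})"
    proof
      fix w assume w: "w \<in> V - {p}"
      then obtain g where "g \<in> E" "p \<in> g" "w \<in> g" using cov[OF pV, of w] by auto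
      then show "w \<in> (\<Union>l\<in>Lp. l - {p})" using w unfolding Lp_def by auto
    qed
    then have "card (V - {p}) \<le> card (\<Union>l\<in>Lp. l - {p})"
      using finLp LpE efin by (intro card_mono) auto
    also have "\<dots> \<le> (\<Sum>l\<in>Lp. card (l - {p}))" by (rule card_UN_le[OF finLp])
    also have "\<dots> = (\<Sum>l\<in>Lp. q - 1)"
      by (rule sum.cong) (use LpE sz efin in \<open>auto simp: Lp_def card_Diff_singleton\<close>)
    also have "\<dots> = card Lp * (q - 1)" by simp
    finally have A: "q * q - 1 \<le> card Lp * (q - 1)" using pV finV qn ncard by (simp add: card_Diff_singleton)
    show ?thesis
    proof (rule ccontr)
      assume "\<not> q + 1 \<le> card Lp"
      then have "card Lp \<le> q" by simp
      then have "card Lp * (q - 1) \<le> q * (q - 1)" by (rule mult_le_mono1)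
      also have "\<dots> = q * q - q" by (simp add: right_diff_distrib')
      finally have B: "card Lp * (q - 1) \<le> q * q - q" .
      have "q * q - q < q * q - 1" proof -
        have "q * 2 \<le> q * q" using q2 by (rule mult_le_mono2)
        then show ?thesis using q2 by linarith
      qed
      then show False using A B by linarith
    qed
  qed
  have Lpn: "card Lp \<le> n"
  proof -
    have "q + 1 \<le> q * q" proof -
      have "q * 2 \<le> q * q" using q2 by (rule mult_le_mono2)
      then show ?thesis using q2 by linarith
    qed
    then show ?thesis using LpD Dq qn by linarith
  qed
  have ex: "\<exists>l\<in>Lp. l = e \<or> l \<inter> e = {}" if eE: "e \<in> E" for e
  proof (cases "p \<in> e")
    case True then show ?thesis using eE unfolding Lp_def by auto
  next
    case pe: False
    define M where "M = {l\<in>Lp. l \<inter> e \<noteq> {}}"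
    define h where "h l = (SOME u. u \<in> l \<inter> e)" for l
    have hM: "h l \<in> l \<inter> e" if "l \<in> M" for l
    proof -
      have "\<exists>u. u \<in> l \<inter> e" using that unfolding M_def by auto
      then show ?thesis unfolding h_def by (rule someI_ex)
    qed
    have "inj_on h M"
    proof (rule inj_onI)
      fix l1 l2 assume l: "l1 \<in> M" "l2 \<in> M" "h l1 = h l2"
      have "p \<noteq> h l1" using hM[OF l(1)] pe by auto
      then show "l1 = l2" using lin2[of l1 l2 p "h l1"] hM[OF l(1)] hM[OF l(2)] l LpE
        unfolding M_def Lp_def by auto
    qed
    then have "card M \<le> card e" using hM efin[OF eE] by (intro card_inj_on_le) auto
    then have "card M < card Lp" using sz[OF eE] Lpbig by simp
    moreover have "finite M" unfolding M_def using finLp by simp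
    ultimately have "\<not> Lp \<subseteq> M" using card_mono[OF \<open>finite M\<close>, of Lp] by linarith
    then obtain l where "l \<in> Lp" "l \<notin> M" by auto
    then show ?thesis unfolding M_def by auto
  qed
  obtain g where g: "bij_betw g Lp {0..<card Lp}" using ex_bij_betw_finite_nat[OF finLp] by blast
  define par where "par e = (SOME l. l \<in> Lp \<and> (l = e \<or> l \<inter> e = {}))" for e
  have par: "par e \<in> Lp \<and> (par e = e \<or> par e \<inter> e = {})" if "e \<in> E" for e
    unfolding par_def using ex[OF that] by (rule someI2_bex) auto
  define c where "c e = g (par e)" for e
  have "proper_edge_colouring E n c"
    unfolding proper_edge_colouring_def
  proof (intro conjI ballI impI)
    fix e assume "e \<in> E"
    then have "par e \<in> Lp" using par by auto
    then have "c e < card Lp" unfolding c_def using g bij_betw_apply by fastforce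
    then show "c e < n" using Lpn by simp
  next
    fix e f assume ef: "e \<in> E" "f \<in> E" "e \<noteq> f \<and> e \<inter> f \<noteq> {}"
    show "c e \<noteq> c f"
    proof
      assume "c e = c f"
      moreover have "inj_on g Lp" using g by (rule bij_betw_imp_inj_on)
      ultimately have "par e = par f" using inj_onD[of g Lp "par e" "par f"] par[OF ef(1)] par[OF ef(2)] unfolding c_def by simp
      define l where "l = par e"
      have l: "l \<in> Lp" "l = e \<or> l \<inter> e = {}" "l = f \<or> l \<inter> f = {}"
        using par[OF ef(1)] par[OF ef(2)] \<open>par e = par f\<close> unfolding l_def by auto
      obtain v where v: "v \<in> e" "v \<in> f" using ef by blast
      have vV: "v \<in> V" using v ef esub by blast
      have lE: "l \<in> E" using l LpE by auto
      have vl: "v \<notin> l" using l v ef by blast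
      have le: "l \<inter> e = {}" "l \<inter> f = {}" using l v vl by auto
      define r where "r u = (SOME G. G \<in> E \<and> v \<in> G \<and> u \<in> G)" for u
      have r: "r u \<in> E \<and> v \<in> r u \<and> u \<in> r u" if "u \<in> l" for u
      proof -
        have "u \<in> V" using that lE esub by blast
        moreover have "u \<noteq> v" using that vl by blast
        ultimately have "\<exists>G. G \<in> E \<and> v \<in> G \<and> u \<in> G" using cov[OF vV, of u] by blast
        then show ?thesis unfolding r_def by (rule someI_ex)
      qed
      have inj: "inj_on r l"
      proof (rule inj_onI)
        fix u1 u2 assume u: "u1 \<in> l" "u2 \<in> l" "r u1 = r u2"
        show "u1 = u2"
        proof (rule ccontr)
          assume "u1 \<noteq> u2"
          then have "r u1 = l" using lin2[of "r u1" l u1 u2] r[OF u(1)] r[OF u(2)] u lE by auto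
          then show False using r[OF u(1)] vl by simp
        qed
      qed
      have crl: "card (r ` l) = q" using card_image[OF inj] sz[OF lE] by simp
      have ne: "e \<notin> r ` l" "f \<notin> r ` l" using r le by blast+
      have sub: "insert e (insert f (r ` l)) \<subseteq> {G\<in>E. v \<in> G}" using r ef v by auto
      have "card (insert e (insert f (r ` l))) = q + 2"
        using ne crl ef efin[OF lE] by simp
      then have "q + 2 \<le> card {G\<in>E. v \<in> G}" using card_mono[OF _ sub] finE by simp
      moreover have "card {G\<in>E. v \<in> G} \<le> D + 1" using deg_le[OF _ vV, of E] by simp
      ultimately show False using Dq by simp
    qed
  qed
  then show ?thesis by blast
qed

end

theorem theorem5p1:
  fixes V :: "'a set" and E :: "'a set set" and n :: nat
  assumes "hypergraph V E"
    and "loopless E"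
    and "linear_hg E"
    and "n = card V"
    and "real (max_degree V E) \<le> sqrt (real n) + 1"
  shows "chromatic_index E \<le> n"
proof -
  define Dl where "Dl = max_degree V E"
  define D where "D = Dl - 1"
  have finV: "finite V" using assms(1) unfolding hypergraph_def by auto
  have degD: "hdegree E v \<le> D + 1" if "v \<in> V" for v
  proof -
    have "hdegree E v \<le> Dl" unfolding Dl_def max_degree_def
      using finV that by (intro le_cSup_finite) auto
    then show ?thesis unfolding D_def by linarith
  qed
  have "real D \<le> sqrt (real n)"
  proof (cases "Dl = 0")
    case True then show ?thesis unfolding D_def by simp
  next
    case False
    then have "real D = real Dl - 1" unfolding D_def by (simp add: of_nat_diff)
    then show ?thesis using assms(5) unfolding Dl_def by simp
  qed
  then have "(real D)^2 \<le> (sqrt (real n))^2" by (intro power_mono) auto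
  then have "real (D * D) \<le> real n" by (simp add: power2_eq_square)
  then have DD: "D * D \<le> n" by (simp only: of_nat_le_iff)
  interpret lhg V E D n
    using assms(1-4) degD DD by unfold_locales auto
  have col: "\<exists>c. proper_edge_colouring E n c"
  proof (cases "E \<noteq> {} \<and> (\<forall>e\<in>E. n \<le> card (conf E e))")
    case True
    then obtain q where q: "q * q = n" "\<forall>e\<in>E. card e = q"
      "\<forall>v\<in>V. \<forall>w\<in>V. v \<noteq> w \<longrightarrow> (\<exists>g\<in>E. v \<in> g \<and> w \<in> g)"
      using alltight[of E] by blast
    have "D \<le> q"
    proof (rule ccontr)
      assume "\<not> D \<le> q" then have "q < D" by simp
      then have "q * q < D * D" by (simp add: mult_strict_mono)
      then show False using q(1) DD by simp
    qed
    then show ?thesis using affine[OF q(1)] True q(2,3) by blast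
  next
    case False
    show ?thesis
    proof (rule degen[OF finE])
      fix S assume S: "S \<subseteq> E" "S \<noteq> {}"
      show "\<exists>e\<in>S. card (conf S e) < n"
      proof (rule ccontr)
        assume "\<not> (\<exists>e\<in>S. card (conf S e) < n)"
        then have big: "\<And>e. e \<in> S \<Longrightarrow> n \<le> card (conf S e)" by (simp add: not_less)
        obtain q where q: "\<forall>v\<in>V. \<forall>w\<in>V. v \<noteq> w \<longrightarrow> (\<exists>g\<in>S. v \<in> g \<and> w \<in> g)"
          using alltight[OF S big] by blast
        have "E \<subseteq> S"
        proof
          fix g assume g: "g \<in> E"
          obtain x y where xy: "x \<in> g" "y \<in> g" "x \<noteq> y" using two_elems[OF g] by blast
          have "x \<in> V" "y \<in> V" using xy g esub by auto
          then obtain f where f: "f \<in> S" "x \<in> f" "y \<in> f" using q xy by blast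
          then have "g = f" using lin2[of g f x y] xy g S by auto
          then show "g \<in> S" using f by simp
        qed
        then have "S = E" using S by blast
        then show False using False S big by auto
      qed
    qed
  qed
  then obtain c where "proper_edge_colouring E n c" by blast
  then show ?thesis unfolding chromatic_index_def by (rule Least_le[of "\<lambda>k. \<exists>c. proper_edge_colouring E k c", OF exI])
qed

end
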